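(* Let $0<\alpha\le\beta$ with $\alpha\le1$, and let $\gamma:[0,1]\to\mathbb{R}^n$ be an $(\alpha,\beta)$-bi-Hölder curve with constant $1\le C_\gamma<\infty$. Then there exists $C=C(\alpha,C_\gamma,n)>0$ such that for all $0<r<1$, $$\Lambda(B(\widehat\gamma,r),r)\le C\, r^{\frac{\alpha-1}{\alpha}}.$$
   Context: A map $\gamma:[0,1]\to\mathbb{R}^n$ is an $(\alpha,\beta)$-bi-Hölder curve with constant $C_\gamma\ge1$ if $\frac1{C_\gamma}|x-y|^\beta\le|\gamma(x)-\gamma(y)|\le C_\gamma|x-y|^\alpha$ for all $x,y\in[0,1]$. $\widehat\gamma:=\gamma([0,1])$. For $A\subset\mathbb{R}^n$, $B(A,r):=\{x:\mathrm{dist}(x,A)\le r\}$. A rectifiable curve is the image of a Lipschitz map $[0,1]\to\mathbb{R}^n$. $\Lambda(E,r):=\inf\{\mathcal{H}^1(\Gamma):\Gamma \text{ a rectifiable curve with } B(\Gamma,r)\supset E\}$. *)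

theory Defs
  imports "HOL-Analysis.Analysis"
begin

definition hausdorff_pre1 :: "real \<Rightarrow> 'a::metric_space set \<Rightarrow> ennreal" where
  "hausdorff_pre1 \<delta> E =
     (INF U \<in> {U :: nat \<Rightarrow> 'a set. E \<subseteq> (\<Union>i. U i) \<and> (\<forall>i. diameter (U i) \<le> \<delta>)}.
        (\<Sum>i. ennreal (diameter (U i))))"

definition hausdorff1 :: "'a::metric_space set \<Rightarrow> ennreal" where
  "hausdorff1 E = (SUP \<delta> \<in> {0<..}. hausdorff_pre1 \<delta> E)"

definition bi_hoelder_curve :: "real \<Rightarrow> real \<Rightarrow> real \<Rightarrow> (real \<Rightarrow> 'a::metric_space) \<Rightarrow> bool" where
  "bi_hoelder_curve \<alpha> \<beta> C \<gamma> \<longleftrightarrow> C \<ge> 1 \<and>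
     (\<forall>x\<in>{0..1}. \<forall>y\<in>{0..1}.
        (1 / C) * \<bar>x - y\<bar> powr \<beta> \<le> dist (\<gamma> x) (\<gamma> y) \<and>
        dist (\<gamma> x) (\<gamma> y) \<le> C * \<bar>x - y\<bar> powr \<alpha>)"

definition nbhd :: "'a::metric_space set \<Rightarrow> real \<Rightarrow> 'a set" where
  "nbhd A r = {x. infdist x A \<le> r}"

definition rectifiable_curve :: "'a::metric_space set \<Rightarrow> bool" where
  "rectifiable_curve \<Gamma> \<longleftrightarrow> (\<exists>g L. L-lipschitz_on {0..1::real} g \<and> \<Gamma> = g ` {0..1})"

definition Lambda :: "'a::metric_space set \<Rightarrow> real \<Rightarrow> ennreal" where
  "Lambda E r = (INF \<Gamma> \<in> {\<Gamma>. rectifiable_curve \<Gamma> \<and> E \<subseteq> nbhd \<Gamma> r}. hausdorff1 \<Gamma>)"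

end

theory Submission
  imports Defs
begin


lemma haus_lip:
  fixes g :: "real \<Rightarrow> 'a::real_normed_vector"
  assumes L: "L-lipschitz_on {0..1} g"
  shows "hausdorff1 (g ` {0..1}) \<le> ennreal L"
  unfolding hausdorff1_def
proof (rule SUP_least)
  fix \<delta> :: real assume "\<delta> \<in> {0<..}"
  hence d: "\<delta> > 0" by simp
  have L0: "L \<ge> 0" using L by (simp add: lipschitz_on_def)
  obtain m :: nat where m: "m \<ge> 1" "L / m \<le> \<delta>"
  proof -
    obtain k :: nat where k: "L / \<delta> < k" using reals_Archimedean2 by blast
    show ?thesis
    proof (rule that[of "Suc k"])
      have "L < Suc k * \<delta>" using k d by (simp add: field_simps)
      thus "L / real (Suc k) \<le> \<delta>" by (simp add: field_simps)
    qed simp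
  qed
  define U where "U i = (if i < m then g ` {real i / m .. (real i + 1) / m} else {})" for i
  have diam: "diameter (U i) \<le> L / m" for i
  proof (cases "i < m")
    case True
    have "diameter (g ` {real i / m .. (real i + 1) / m}) \<le> L / m"
    proof (rule diameter_le)
      show "g ` {real i / m..(real i + 1) / m} \<noteq> {} \<or> 0 \<le> L / m" using L0 by simp
      fix x y assume "x \<in> g ` {real i / m..(real i + 1) / m}" "y \<in> g ` {real i / m..(real i + 1) / m}"
      then obtain s t where st: "s \<in> {real i / m..(real i + 1) / m}" "t \<in> {real i / m..(real i + 1) / m}"
        "x = g s" "y = g t" by auto
      have z: "0 \<le> real i / m" by simp
      have o: "(real i + 1) / m \<le> 1" using True m by (simp add: field_simps)
      have "0 \<le> s" "s \<le> 1" "0 \<le> t" "t \<le> 1" using st(1,2) z o by (simp only: atLeastAtMost_iff; linarith)+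
      hence "s \<in> {0..1}" "t \<in> {0..1}" by auto
      hence gl: "dist (g s) (g t) \<le> L * dist s t" using L by (simp add: lipschitz_on_def)
      have e: "(real i + 1) / m = real i / m + 1 / m" by (simp add: add_divide_distrib)
      have "dist s t \<le> 1 / m" using st(1,2) e unfolding dist_real_def atLeastAtMost_iff by linarith
      hence "L * dist s t \<le> L * (1 / m)" using L0 by (rule mult_left_mono)
      with gl have "dist (g s) (g t) \<le> L * (1/m)" by linarith
      thus "norm (x - y) \<le> L / m" using st by (simp add: dist_norm)
    qed
    thus ?thesis using True by (simp add: U_def)
  next
    case False thus ?thesis using L0 by (simp add: U_def)
  qed
  have cover: "g ` {0..1} \<subseteq> (\<Union>i. U i)"
  proof
    fix x assume "x \<in> g ` {0..1}"
    then obtain t where t: "t \<in> {0..1}" "x = g t" by auto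
    define i where "i = min (nat \<lfloor>t * m\<rfloor>) (m - 1)"
    have im: "i < m" using m by (simp add: i_def)
    have "real i \<le> t * m"
      using t by (auto simp: i_def min_def) (linarith+)
    moreover have "t * m \<le> real i + 1"
    proof (cases "nat \<lfloor>t * m\<rfloor> \<le> m - 1")
      case True thus ?thesis using t by (simp add: i_def min_def)
    next
      case False
      hence "i = m - 1" by (simp add: i_def)
      thus ?thesis using t m by (simp add: of_nat_diff)
    qed
    ultimately have "t \<in> {real i / m .. (real i + 1) / m}" using m by (simp add: field_simps)
    thus "x \<in> (\<Union>i. U i)" using im t by (auto simp: U_def)
  qed
  have "hausdorff_pre1 \<delta> (g ` {0..1}) \<le> (\<Sum>i. ennreal (diameter (U i)))"
    unfolding hausdorff_pre1_def
    by (rule INF_lower) (use cover diam m d order_trans in blast)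
  also have "(\<Sum>i. ennreal (diameter (U i))) = (\<Sum>i<m. ennreal (diameter (U i)))"
    by (rule suminf_finite) (auto simp: U_def)
  also have "\<dots> \<le> (\<Sum>i<m. ennreal (L / m))"
    by (rule sum_mono) (use diam ennreal_leI in blast)
  also have "\<dots> = ennreal L"
  proof -
    have "(\<Sum>i<m. ennreal (L / m)) = ennreal (real m) * ennreal (L / m)"
      by (simp add: ennreal_of_nat_eq_real_of_nat)
    also have "\<dots> = ennreal (real m * (L / m))" using L0 by (subst ennreal_mult) auto
    also have "real m * (L / m) = L" using m by simp
    finally show ?thesis .
  qed
  finally show "hausdorff_pre1 \<delta> (g ` {0..1}) \<le> ennreal L" .
qed

fun poly :: "'a::real_normed_vector list \<Rightarrow> real \<Rightarrow> 'a" where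
  "poly [] t = 0"
| "poly [q] t = q"
| "poly (q # q' # qs) t = (if t \<le> 1 then q + t *\<^sub>R (q' - q) else poly (q' # qs) (t - 1))"

lemma poly_nth: "j < length qs \<Longrightarrow> poly qs (real j) = qs ! j"
proof (induction qs arbitrary: j rule: induct_list012)
  case (3 q q' qs)
  show ?case
  proof (cases j)
    case 0 thus ?thesis by simp
  next
    case (Suc k)
    show ?thesis
    proof (cases k)
      case 0 thus ?thesis using Suc by simp
    next
      case (Suc k')
      have "poly (q # q' # qs) (real j) = poly (q' # qs) (real k)"
        using \<open>j = Suc k\<close> Suc by simp
      also have "\<dots> = (q' # qs) ! k" using 3(2)[of k] "3.prems" \<open>j = Suc k\<close> by simp
      finally show ?thesis using \<open>j = Suc k\<close> by simp
    qed
  qed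
qed auto

lemma lip_shift:
  fixes c :: real and f :: "real \<Rightarrow> 'a::metric_space"
  assumes "D-lipschitz_on {0..c} f"
  shows "D-lipschitz_on {1..c+1} (\<lambda>t. f (t - 1))"
proof (rule lipschitz_onI)
  fix x y assume "x \<in> {1..c+1}" "y \<in> {1..c+1}"
  hence "x - 1 \<in> {0..c}" "y - 1 \<in> {0..c}" by auto
  hence "dist (f (x - 1)) (f (y - 1)) \<le> D * dist (x - 1) (y - 1)" using assms lipschitz_onD by blast
  thus "dist (f (x - 1)) (f (y - 1)) \<le> D * dist x y" by (simp add: dist_real_def)
qed (use assms lipschitz_on_nonneg in blast)

lemma poly_lip:
  fixes qs :: "'a::real_normed_vector list"
  assumes "qs \<noteq> []" "D \<ge> 0" "\<And>j. Suc j < length qs \<Longrightarrow> dist (qs ! j) (qs ! Suc j) \<le> D"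
  shows "D-lipschitz_on {0..real (length qs - 1)} (poly qs)"
  using assms
proof (induction qs rule: induct_list012)
  case (2 q)
  thus ?case by (auto simp: lipschitz_on_def)
next
  case (3 q q' qs)
  have IH: "D-lipschitz_on {0..real (length (q' # qs) - 1)} (poly (q' # qs))"
    using 3(2)[of] "3.prems" by (metis Suc_less_eq length_Cons list.distinct(1) nth_Cons_Suc)
  have seg: "D-lipschitz_on {0..1} (\<lambda>t. q + t *\<^sub>R (q' - q))"
  proof (rule lipschitz_onI)
    fix x y :: real
    have "dist (q + x *\<^sub>R (q' - q)) (q + y *\<^sub>R (q' - q)) = \<bar>x - y\<bar> * dist q' q"
      by (simp add: dist_norm scaleR_diff_left[symmetric] dist_real_def)
    also have "\<dots> \<le> \<bar>x - y\<bar> * D" using "3.prems"(3)[of 0] by (intro mult_left_mono) (auto simp: dist_commute)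
    finally show "dist (q + x *\<^sub>R (q' - q)) (q + y *\<^sub>R (q' - q)) \<le> D * dist x y"
      by (simp add: dist_real_def mult.commute)
  qed (use "3.prems" in auto)
  have sh: "D-lipschitz_on {1..real (length (q' # qs) - 1) + 1} (\<lambda>t. poly (q' # qs) (t - 1))"
    by (rule lip_shift[OF IH])
  have p0: "poly (q' # qs) 0 = q'" using poly_nth[of 0 "q' # qs"] by simp
  have "D-lipschitz_on {0..real (length (q' # qs) - 1) + 1}
      (\<lambda>x. if x \<le> 1 then q + x *\<^sub>R (q' - q) else poly (q' # qs) (x - 1))"
    by (rule lipschitz_on_concat[OF seg sh]) (simp add: p0)
  moreover have "(\<lambda>x. if x \<le> 1 then q + x *\<^sub>R (q' - q) else poly (q' # qs) (x - 1)) = poly (q # q' # qs)"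
    by auto
  moreover have "real (length (q' # qs) - 1) + 1 = real (length (q # q' # qs) - 1)" by simp
  ultimately show ?case by (simp add: add.commute)
qed auto


lemma poly_curve:
  fixes qs :: "'a::real_normed_vector list"
  assumes "qs \<noteq> []" "D \<ge> 0" "\<And>j. Suc j < length qs \<Longrightarrow> dist (qs ! j) (qs ! Suc j) \<le> D"
  shows "\<exists>\<Gamma>. rectifiable_curve \<Gamma> \<and> set qs \<subseteq> \<Gamma> \<and> hausdorff1 \<Gamma> \<le> ennreal (real (length qs - 1) * D)"
proof -
  define m where "m = real (length qs - 1)"
  have m0: "m \<ge> 0" by (simp add: m_def)
  have P: "D-lipschitz_on {0..m} (poly qs)" unfolding m_def by (rule poly_lip[OF assms])
  define g where "g t = poly qs (m * t)" for t
  have G: "(m * D)-lipschitz_on {0..1} g"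
  proof (rule lipschitz_onI)
    fix x y :: real assume "x \<in> {0..1}" "y \<in> {0..1}"
    hence "m * x \<in> {0..m}" "m * y \<in> {0..m}" using m0 by (auto simp: mult_right_le_one_le)
    hence "dist (g x) (g y) \<le> D * dist (m * x) (m * y)" using P lipschitz_onD unfolding g_def by blast
    also have "dist (m * x) (m * y) = m * dist x y" using m0
      by (simp add: dist_real_def right_diff_distrib[symmetric] abs_mult)
    finally show "dist (g x) (g y) \<le> m * D * dist x y" by (simp add: mult_ac)
  qed (use m0 assms(2) in simp)
  have sub: "set qs \<subseteq> g ` {0..1}"
  proof
    fix q assume "q \<in> set qs"
    then obtain j where j: "j < length qs" "q = qs ! j" by (auto simp: in_set_conv_nth)
    show "q \<in> g ` {0..1}"
    proof (cases "m = 0")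
      case True
      hence "j = 0" using j unfolding m_def by simp
      hence "q = g 0" using j poly_nth[of 0 qs] by (simp add: g_def)
      thus ?thesis by auto
    next
      case False
      hence mp: "m > 0" using m0 by simp
      have "real j \<le> m" using j unfolding m_def by linarith
      hence "real j / m \<in> {0..1}" using mp by simp
      moreover have "g (real j / m) = q" using mp j poly_nth[of j qs] by (simp add: g_def)
      ultimately show ?thesis by force
    qed
  qed
  have "rectifiable_curve (g ` {0..1})" unfolding rectifiable_curve_def using G by blast
  moreover have "hausdorff1 (g ` {0..1}) \<le> ennreal (m * D)" by (rule haus_lip[OF G])
  ultimately show ?thesis using sub unfolding m_def by blast
qed

lemma finite_intbox: "finite {k::real^'n. \<forall>i. k$i \<in> \<int> \<and> \<bar>k$i\<bar> \<le> K}"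
proof -
  define A where "A = real_of_int ` {-\<lceil>K\<rceil>..\<lceil>K\<rceil>}"
  have "{k::real^'n. \<forall>i. k$i \<in> \<int> \<and> \<bar>k$i\<bar> \<le> K} \<subseteq> vec_lambda ` (PiE UNIV (\<lambda>_. A))"
  proof
    fix k :: "real^'n" assume "k \<in> {k::real^'n. \<forall>i. k$i \<in> \<int> \<and> \<bar>k$i\<bar> \<le> K}"
    hence k: "\<And>i. k$i \<in> \<int>" "\<And>i. \<bar>k$i\<bar> \<le> K" by auto
    have "k$i \<in> A" for i
    proof -
      obtain z where z: "k$i = of_int z" using k(1)[of i] Ints_cases by blast
      have "\<bar>z\<bar> \<le> \<lceil>K\<rceil>" using k(2)[of i] z by linarith
      hence "z \<in> {-\<lceil>K\<rceil>..\<lceil>K\<rceil>}" by (simp add: abs_le_iff)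
      thus ?thesis unfolding A_def using z by blast
    qed
    hence "(\<lambda>i. k$i) \<in> PiE UNIV (\<lambda>_. A)" by (simp add: PiE_UNIV_domain)
    moreover have "k = vec_lambda (\<lambda>i. k$i)" by simp
    ultimately show "k \<in> vec_lambda ` (PiE UNIV (\<lambda>_. A))" by blast
  qed
  moreover have "finite (PiE UNIV (\<lambda>_::'n. A))" by (rule finite_PiE) (auto simp: A_def)
  ultimately show ?thesis using finite_subset by blast
qed



theorem lemma3p10:
  fixes \<alpha> :: real
  assumes "0 < \<alpha>" "\<alpha> \<le> 1"
  shows "\<forall>C\<^sub>\<gamma>. \<exists>C>0. \<forall>(\<beta>::real) (\<gamma> :: real \<Rightarrow> real ^ 'n).
           \<alpha> \<le> \<beta> \<and> bi_hoelder_curve \<alpha> \<beta> C\<^sub>\<gamma> \<gamma> \<longrightarrow>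
           (\<forall>r. 0 < r \<and> r < 1 \<longrightarrow>
              Lambda (nbhd (\<gamma> ` {0..1}) r) r \<le> ennreal (C * r powr ((\<alpha> - 1) / \<alpha>)))"
proof
  fix Cg :: real
  show "\<exists>C>0. \<forall>(\<beta>::real) (\<gamma> :: real \<Rightarrow> real ^ 'n).
           \<alpha> \<le> \<beta> \<and> bi_hoelder_curve \<alpha> \<beta> Cg \<gamma> \<longrightarrow>
           (\<forall>r. 0 < r \<and> r < 1 \<longrightarrow>
              Lambda (nbhd (\<gamma> ` {0..1}) r) r \<le> ennreal (C * r powr ((\<alpha> - 1) / \<alpha>)))"
  proof (cases "Cg \<ge> 1")
    case False
    show ?thesis by (rule exI[of _ 1]) (use False in \<open>simp add: bi_hoelder_curve_def\<close>)
  next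
    case Cg1: True
    define n where "n = CARD('n)"
    have n1: "real n \<ge> 1" unfolding n_def by simp
    define K where "K = real (3 * n + 1)"
    define T where "T = {k::real^'n. \<forall>i. k$i \<in> \<int> \<and> \<bar>k$i\<bar> \<le> K}"
    have finT: "finite T" unfolding T_def by (rule finite_intbox)
    have T0: "0 \<in> T" unfolding T_def K_def by simp
    have cardT: "card T > 0" using finT T0 card_gt_0_iff by blast
    define C where "C = 3 * Cg powr (1 / \<alpha>) * real (card T) * (2 * K + 1)"
    have K0: "K \<ge> 0" unfolding K_def by simp
    have Cpos: "C > 0" unfolding C_def using Cg1 cardT K0 by simp
    show ?thesis
    proof (intro exI[of _ C] conjI allI impI Cpos)
      fix \<beta> :: real and \<gamma> :: "real \<Rightarrow> real^'n" and r :: real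
      assume "\<alpha> \<le> \<beta> \<and> bi_hoelder_curve \<alpha> \<beta> Cg \<gamma>"
      hence up: "\<And>x y. x \<in> {0..1} \<Longrightarrow> y \<in> {0..1} \<Longrightarrow> dist (\<gamma> x) (\<gamma> y) \<le> Cg * \<bar>x - y\<bar> powr \<alpha>"
        unfolding bi_hoelder_curve_def by blast
      assume "0 < r \<and> r < 1"
      hence r0: "0 < r" and r1: "r < 1" by auto
      define \<delta> where "\<delta> = (r / Cg) powr (1 / \<alpha>)"
      have rC: "0 < r / Cg" "r / Cg < 1" using r0 r1 Cg1 by (auto simp: field_simps)
      have d0: "\<delta> > 0" unfolding \<delta>_def using rC r0 Cg1 by simp
      have d1: "\<delta> \<le> 1" unfolding \<delta>_def using rC assms(1) by (intro powr_le1) auto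
      have da: "\<delta> powr \<alpha> = r / Cg" unfolding \<delta>_def using assms(1) rC r0 Cg1 by (simp add: powr_powr)
      define N where "N = nat \<lceil>1 / \<delta>\<rceil>"
      have N1: "real N \<ge> 1 / \<delta>" unfolding N_def by linarith
      have "1 / \<delta> > 0" using d0 by simp
      hence Nlt: "real N < 1 / \<delta> + 1" unfolding N_def
        by (simp add: of_nat_nat) linarith
      have Npos: "real N > 0" using N1 d0 by (smt (verit) divide_pos_pos)
      have invN: "1 / real N \<le> \<delta>" using N1 d0 Npos by (simp add: field_simps)
      have hol: "dist (\<gamma> a) (\<gamma> b) \<le> r" if "a \<in> {0..1}" "b \<in> {0..1}" "\<bar>a - b\<bar> \<le> 1 / real N" for a b
      proof -
        have "dist (\<gamma> a) (\<gamma> b) \<le> Cg * \<bar>a - b\<bar> powr \<alpha>" using up that by blast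
        also have "\<bar>a - b\<bar> powr \<alpha> \<le> \<delta> powr \<alpha>"
          using that invN assms(1) by (intro powr_mono2) auto
        hence "Cg * \<bar>a - b\<bar> powr \<alpha> \<le> Cg * \<delta> powr \<alpha>" using Cg1 by simp
        also have "Cg * \<delta> powr \<alpha> = r" using da Cg1 by simp
        finally show ?thesis .
      qed
      define h where "h = r / real n"
      have h0: "h > 0" unfolding h_def using r0 n1 by simp
      define Offs where "Offs = (\<lambda>k. h *\<^sub>R k) ` T"
      have finO: "finite Offs" unfolding Offs_def using finT by simp
      obtain offl where offl: "set offl = Offs" "distinct offl" using finite_distinct_list[OF finO] by blast
      define M where "M = length offl"
      have "M = card (set offl)" unfolding M_def using offl(2) by (simp add: distinct_card)
      also have "\<dots> = card Offs" using offl(1) by simp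
      also have "\<dots> \<le> card T" unfolding Offs_def using finT by (rule card_image_le)
      finally have MT: "M \<le> card T" .
      have "0 \<in> Offs" unfolding Offs_def using T0 by force
      hence "offl \<noteq> []" using offl(1) by auto
      hence M0: "M > 0" unfolding M_def by simp
      have knorm: "norm k \<le> real n * K" if "k \<in> T" for k
      proof -
        have "norm k \<le> (\<Sum>i\<in>UNIV. \<bar>k$i\<bar>)" by (rule norm_le_l1_cart)
        also have "\<dots> \<le> (\<Sum>i\<in>(UNIV::'n set). K)" using that unfolding T_def by (intro sum_mono) auto
        also have "\<dots> = real n * K" by (simp add: n_def)
        finally show ?thesis .
      qed
      have wnorm: "norm w \<le> r * K" if wi: "w \<in> set offl" for w
      proof -
        obtain k where k: "k \<in> T" "w = h *\<^sub>R k" using wi offl unfolding Offs_def by auto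
        have "norm w = h * norm k" using k h0 by simp
        also have "\<dots> \<le> h * (real n * K)" using knorm[OF k(1)] h0 by (intro mult_left_mono) auto
        also have "\<dots> = r * K" unfolding h_def using n1 by simp
        finally show ?thesis .
      qed
      define pts where "pts = map (\<lambda>j. \<gamma> (real (j div M) / real N) + offl ! (j mod M)) [0..<(N+1)*M]"
      define D where "D = r * (2 * K + 1)"
      have D0: "D \<ge> 0" unfolding D_def using r0 K0 by simp
      have lenp: "length pts = (N+1)*M" unfolding pts_def by simp
      have ptsne: "pts \<noteq> []" using lenp M0 by auto
      have nodes: "real i / real N \<in> {0..1}" if "i \<le> N" for i
        using that Npos by (simp add: field_simps)
      have steps: "dist (pts ! j) (pts ! Suc j) \<le> D" if "Suc j < length pts" for j
      proof -
        define a where "a = j div M"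
        define b where "b = Suc j div M"
        have bN: "b \<le> N"
        proof -
          have "Suc j < (N+1)*M" using that lenp by simp
          hence "Suc j div M < N + 1" using M0 by (simp add: div_less_iff_less_mult)
          thus ?thesis unfolding b_def by simp
        qed
        have ab1: "a \<le> b" unfolding a_def b_def by (simp add: div_le_mono)
        have "Suc j div M \<le> (j + M) div M" using M0 by (intro div_le_mono) simp
        also have "(j + M) div M = j div M + 1" using M0 by simp
        finally have ab: "a \<le> b" "b \<le> a + 1" using ab1 unfolding a_def b_def by auto
        have aN: "a \<le> N" using ab bN by simp
        have "\<bar>real a / N - real b / N\<bar> \<le> 1 / N"
        proof -
          have "\<bar>real a - real b\<bar> \<le> 1" using ab by linarith
          thus ?thesis using Npos by (simp add: abs_divide diff_divide_distrib[symmetric] divide_right_mono)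
        qed
        hence g: "dist (\<gamma> (real a / N)) (\<gamma> (real b / N)) \<le> r" using hol nodes aN bN by blast
        have w1: "offl ! (j mod M) \<in> set offl" using M0 M_def by simp
        have w2: "offl ! (Suc j mod M) \<in> set offl" using M0 M_def by simp
        have pj: "pts ! j = \<gamma> (real a / N) + offl ! (j mod M)" unfolding pts_def a_def using that lenp
          by simp
        have pj1: "pts ! Suc j = \<gamma> (real b / N) + offl ! (Suc j mod M)" unfolding pts_def b_def using that lenp
          by (simp del: upt_Suc)
        have "dist (pts ! j) (pts ! Suc j) \<le> dist (\<gamma> (real a / N)) (\<gamma> (real b / N)) + norm (offl ! (j mod M)) + norm (offl ! (Suc j mod M))"
        proof -
          have tri: "norm ((p + w) - (p' + w')) \<le> norm (p - p') + norm w + norm w'" for p p' w w' :: "real^'n"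
          proof -
            have "(p + w) - (p' + w') = (p - p') + (w - w')" by simp
            hence "norm ((p + w) - (p' + w')) \<le> norm (p - p') + norm (w - w')" by (metis norm_triangle_ineq)
            also have "norm (w - w') \<le> norm w + norm w'" by (rule norm_triangle_ineq4)
            finally show ?thesis by simp
          qed
          show ?thesis unfolding pj pj1 dist_norm by (rule tri)
        qed
        also have "\<dots> \<le> r + r * K + r * K" using g wnorm[OF w1] wnorm[OF w2] by linarith
        finally show ?thesis unfolding D_def by (simp add: algebra_simps)
      qed
      obtain \<Gamma> where \<Gamma>: "rectifiable_curve \<Gamma>" "set pts \<subseteq> \<Gamma>"
        "hausdorff1 \<Gamma> \<le> ennreal (real (length pts - 1) * D)"
        using poly_curve[OF ptsne D0 steps] by blast
      have cov: "nbhd (\<gamma> ` {0..1}) r \<subseteq> nbhd \<Gamma> r"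
      proof
        fix x assume "x \<in> nbhd (\<gamma> ` {0..1}) r"
        hence ix: "infdist x (\<gamma> ` {0..1}) \<le> r" by (simp add: nbhd_def)
        have "\<exists>y\<in>\<gamma> ` {0..1}. dist x y < 2 * r"
        proof (rule ccontr)
          assume "\<not> ?thesis"
          hence "\<forall>y\<in>\<gamma> ` {0..1}. 2 * r \<le> dist x y" by auto
          hence "2 * r \<le> infdist x (\<gamma> ` {0..1})"
            by (subst infdist_notempty) (auto intro!: cINF_greatest)
          thus False using ix r0 by simp
        qed
        then obtain s where s: "s \<in> {0..1}" "dist x (\<gamma> s) < 2 * r" by auto
        define i where "i = nat \<lfloor>s * N\<rfloor>"
        have si: "real i \<le> s * N" "s * N < real i + 1" using s Npos unfolding i_def by auto
        have iN: "i \<le> N"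
        proof -
          have "s * N \<le> N" using s Npos by (simp add: mult_left_le_one_le)
          thus ?thesis using si by linarith
        qed
        have "\<bar>s - real i / N\<bar> \<le> 1 / N"
        proof -
          have "\<bar>s * N - real i\<bar> \<le> 1" using si by linarith
          hence "\<bar>s * N - real i\<bar> / N \<le> 1 / N" using Npos by (simp add: divide_right_mono)
          moreover have "\<bar>s * N - real i\<bar> / N = \<bar>s - real i / N\<bar>" using Npos
          proof -
            have "(s * N - real i) / N = s - real i / N" using Npos by (simp add: field_simps)
            thus ?thesis using Npos by (metis abs_divide abs_of_pos)
          qed
          ultimately show ?thesis by simp
        qed
        hence "dist (\<gamma> s) (\<gamma> (real i / N)) \<le> r" using hol s nodes iN by blast
        define p where "p = \<gamma> (real i / N)"
        define v where "v = x - p"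
        have vn: "norm v < 3 * r" unfolding v_def p_def
          using s(2) \<open>dist (\<gamma> s) (\<gamma> (real i / N)) \<le> r\<close> dist_triangle[of x "\<gamma> (real i / N)" "\<gamma> s"]
          by (simp add: dist_norm)
        define k :: "real^'n" where "k = (\<chi> j. of_int \<lfloor>v$j / h\<rfloor>)"
        have kT: "k \<in> T" unfolding T_def
        proof (intro CollectI allI conjI)
          fix j
          show "k$j \<in> \<int>" unfolding k_def by simp
          have "\<bar>v$j\<bar> < 3 * r" using component_le_norm_cart[of v j] vn by linarith
          hence "\<bar>v$j\<bar> / h < 3 * r / h" using h0 by (simp add: divide_strict_right_mono)
          moreover have "3 * r / h = 3 * real n" unfolding h_def using r0 n1 by simp
          moreover have "\<bar>v$j / h\<bar> = \<bar>v$j\<bar> / h" using h0 by (simp add: abs_divide abs_of_pos)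
          ultimately have "\<bar>v$j / h\<bar> < 3 * real n" by linarith
          hence "\<bar>of_int \<lfloor>v$j / h\<rfloor>\<bar> \<le> 3 * real n + 1" by linarith
          thus "\<bar>k$j\<bar> \<le> K" unfolding k_def K_def by simp
        qed
        define w where "w = h *\<^sub>R k"
        have wO: "w \<in> set offl" unfolding w_def using offl kT Offs_def by auto
        have "norm (v - w) \<le> (\<Sum>j\<in>UNIV. \<bar>(v - w)$j\<bar>)" by (rule norm_le_l1_cart)
        also have "\<dots> \<le> (\<Sum>j\<in>(UNIV::'n set). h)"
        proof (rule sum_mono)
          fix j
          have "(v - w)$j = h * (v$j / h - of_int \<lfloor>v$j / h\<rfloor>)" unfolding w_def k_def using h0
            by (simp add: algebra_simps)
          moreover have "0 \<le> v$j / h - of_int \<lfloor>v$j / h\<rfloor>" "v$j / h - of_int \<lfloor>v$j / h\<rfloor> < 1" by linarith+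
          ultimately show "\<bar>(v - w)$j\<bar> \<le> h" using h0 by (simp add: abs_mult)
        qed
        also have "\<dots> = r" unfolding h_def n_def using n1 n_def by simp
        finally have vw: "norm (v - w) \<le> r" .
        obtain l where l: "l < M" "offl ! l = w" using wO unfolding M_def by (auto simp: in_set_conv_nth)
        have "p + w \<in> set pts"
        proof -
          have idx: "i * M + l < (N+1) * M"
          proof -
            have "i * M + l < i * M + M" using l by simp
            also have "\<dots> = (i + 1) * M" by simp
            also have "\<dots> \<le> (N + 1) * M" using iN by simp
            finally show ?thesis .
          qed
          have "(i * M + l) div M = i" "(i * M + l) mod M = l" using l by auto
          hence "pts ! (i * M + l) = p + w" unfolding pts_def p_def using idx l by simp
          thus ?thesis using idx lenp by (metis nth_mem)
        qed
        hence "p + w \<in> \<Gamma>" using \<Gamma>(2) by blast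
        moreover have "dist x (p + w) \<le> r" using vw unfolding v_def dist_norm by (simp add: algebra_simps)
        ultimately have "infdist x \<Gamma> \<le> r" by (rule infdist_le2)
        thus "x \<in> nbhd \<Gamma> r" by (simp add: nbhd_def)
      qed
      have "Lambda (nbhd (\<gamma> ` {0..1}) r) r \<le> hausdorff1 \<Gamma>"
        unfolding Lambda_def by (rule INF_lower) (use \<Gamma> cov in blast)
      also have "\<dots> \<le> ennreal (real (length pts - 1) * D)" by (rule \<Gamma>(3))
      also have "\<dots> \<le> ennreal (C * r powr ((\<alpha> - 1) / \<alpha>))"
      proof (rule ennreal_leI)
        have "(N+1)*M \<le> (N+1)*card T" using MT by (rule mult_le_mono2)
        hence "length pts - 1 \<le> (N+1) * card T" using lenp by linarith
        hence "real (length pts - 1) \<le> real ((N+1) * card T)" by (simp only: of_nat_le_iff)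
        also have "\<dots> = (real N + 1) * real (card T)" by (simp add: algebra_simps)
        also have "\<dots> \<le> (3 / \<delta>) * real (card T)"
        proof (rule mult_right_mono)
          have "1 \<le> 1 / \<delta>" using d0 d1 by simp
          thus "real N + 1 \<le> 3 / \<delta>" using Nlt by simp
        qed simp
        finally have A: "real (length pts - 1) * D \<le> (3 / \<delta>) * real (card T) * D"
          using D0 by (rule mult_right_mono)
        have "1 / \<delta> = Cg powr (1 / \<alpha>) * r powr (- (1 / \<alpha>))"
          unfolding \<delta>_def using r0 Cg1 by (simp add: powr_divide powr_minus_divide)
        hence "(3 / \<delta>) * real (card T) * D = 3 * Cg powr (1 / \<alpha>) * real (card T) * (2 * K + 1) * (r powr (- (1 / \<alpha>)) * r)"
        proof -
          assume e: "1 / \<delta> = Cg powr (1 / \<alpha>) * r powr (- (1 / \<alpha>))"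
          have "(3 / \<delta>) * real (card T) * D = 3 * (1 / \<delta>) * real (card T) * D" by simp
          also have "\<dots> = 3 * (Cg powr (1 / \<alpha>) * r powr (- (1 / \<alpha>))) * real (card T) * D" by (simp only: e)
          finally show ?thesis unfolding D_def by (simp add: mult_ac)
        qed
        also have "r powr (- (1 / \<alpha>)) * r = r powr ((\<alpha> - 1) / \<alpha>)"
        proof -
          have "r powr (- (1 / \<alpha>)) * r = r powr (- (1 / \<alpha>)) * r powr 1" using r0 by simp
          also have "\<dots> = r powr (- (1 / \<alpha>) + 1)" by (rule powr_add[symmetric])
          also have "- (1 / \<alpha>) + 1 = (\<alpha> - 1) / \<alpha>" using assms(1) by (simp add: field_simps)
          finally show ?thesis .
        qed
        finally show "real (length pts - 1) * D \<le> C * r powr ((\<alpha> - 1) / \<alpha>)"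
          using A unfolding C_def by simp
      qed
      finally show "Lambda (nbhd (\<gamma> ` {0..1}) r) r \<le> ennreal (C * r powr ((\<alpha> - 1) / \<alpha>))" .
    qed
  qed
qed

end
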